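(* Let $n\ge1$, $\delta\in[0,1]$, $\bm{u}^*\in\mathcal{S}^{n-1}$, let $\mathcal{P}_u'$ be an arbitrary distribution on $\mathcal{S}^{n-1}$, and let $\mathcal{P}_{\bm{a},b}$ be a distribution on $\mathbb{R}^n_+\times\mathbb{R}_+$ such that for some $\underline{a}>0$, $a_i\in[\underline{a},1]$ almost surely for all $i$. For $t=1,\dots,T$, let $(\bm{u}_t,\bm{a}_t,b_t)$ be i.i.d., with $(\bm{a}_t,b_t)\sim\mathcal{P}_{\bm{a},b}$ independent of $\bm{u}_t$, and $\bm{u}_t=\bm{u}^*$ with probability $1-\delta$ and $\bm{u}_t\sim\mathcal{P}_u'$ with probability $\delta$. For $\bm{u}\in\mathbb{R}^n$, $\bm{a}\in\mathbb{R}^n_+$, $b\in\mathbb{R}_+$, let $\mathrm{LP}(\bm{u},\bm{a},b)$ be the linear program $\max_{\bm{x}}\sum_i u_ix_i$ s.t. $\sum_i a_ix_i\le b$, $0\le x_i\le1$, and fix a selection $\bm{x}^{\mathrm{opt}}(\bm{u},\bm{a},b)$ of an optimal solution. Let $\bm{x}^*_t=\bm{x}^{\mathrm{opt}}(\bm{u}_t,\bm{a}_t,b_t)$ and $\bar{\bm{x}}^*_t=\bm{x}^{\mathrm{opt}}(\bm{u}^*,\bm{a}_t,b_t)$, and define $$\mathcal{U}_t=\{\bm{u}\in\mathcal{S}^{n-1}:\bm{x}^*_t\text{ is an optimal solution of }\mathrm{LP}(\bm{u},\bm{a}_t,b_t)\},\qquad \bar{\mathcal{U}}_t=\{\bm{u}\in\mathcal{S}^{n-1}:\bar{\bm{x}}^*_t\text{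 is an optimal solution of }\mathrm{LP}(\bm{u},\bm{a}_t,b_t)\}.$$ Then $$\mathbb{P}\left(\max_{\bm{u}\in\mathcal{S}^{n-1}}\left|\frac1T\sum_{t=1}^TI_{\mathcal{U}_t}(\bm{u})-\frac1T\sum_{t=1}^TI_{\bar{\mathcal{U}}_t}(\bm{u})\right|\le\delta+\frac{\log T}{\sqrt T}\right)\ge1-\frac1T.$$
   Context: $\mathcal{S}^{n-1}$ is the unit sphere in $\mathbb{R}^n$; $I_{\mathcal{E}}(e)=1$ if $e\in\mathcal{E}$ and $0$ otherwise. *)

theory Defs
  imports "HOL-Probability.Probability"
begin

definition lp_feasible :: "real^'n \<Rightarrow> real \<Rightarrow> real^'n \<Rightarrow> bool" where
  "lp_feasible a b x \<longleftrightarrow> (\<forall>i. 0 \<le> x $ i \<and> x $ i \<le> 1) \<and> (\<Sum>i\<in>UNIV. a $ i * x $ i) \<le> b"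

definition lp_optimal :: "real^'n \<Rightarrow> real^'n \<Rightarrow> real \<Rightarrow> real^'n \<Rightarrow> bool" where
  "lp_optimal u a b x \<longleftrightarrow> lp_feasible a b x \<and>
     (\<forall>y. lp_feasible a b y \<longrightarrow> (\<Sum>i\<in>UNIV. u $ i * y $ i) \<le> (\<Sum>i\<in>UNIV. u $ i * x $ i))"

definition opt_dirs :: "real^'n \<Rightarrow> real \<Rightarrow> real^'n \<Rightarrow> (real^'n) set" where
  "opt_dirs a b x = {u \<in> sphere 0 1. lp_optimal u a b x}"

end

theory Submission
  imports Defs
begin

theorem proposition1:
  fixes M :: "'w measure"
    and T :: nat and \<delta> :: real and alow :: real
    and ustar :: "real^'n"
    and P' :: "(real^'n) measure"
    and Pab :: "((real^'n) \<times> real) measure"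
    and u a :: "nat \<Rightarrow> 'w \<Rightarrow> real^'n"
    and b :: "nat \<Rightarrow> 'w \<Rightarrow> real"
    and xopt :: "real^'n \<Rightarrow> real^'n \<Rightarrow> real \<Rightarrow> real^'n"
  assumes M: "prob_space M"
    and T: "T \<ge> 1"
    and delta: "0 \<le> \<delta>" "\<delta> \<le> 1"
    and ustar: "ustar \<in> sphere 0 1"
    and P'_prob: "prob_space P'" and P'_sets: "sets P' = sets borel"
    and P'_sphere: "AE v in P'. v \<in> sphere 0 1"
    and alow: "alow > 0"
    and Pab_support: "AE (av, bv) in Pab. (\<forall>i. alow \<le> av $ i \<and> av $ i \<le> 1) \<and> 0 \<le> bv"
    and meas_u: "\<And>t. t \<in> {1..T} \<Longrightarrow> u t \<in> borel_measurable M"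
    and meas_a: "\<And>t. t \<in> {1..T} \<Longrightarrow> a t \<in> borel_measurable M"
    and meas_b: "\<And>t. t \<in> {1..T} \<Longrightarrow> b t \<in> borel_measurable M"
    and indep: "prob_space.indep_vars M (\<lambda>_. borel) (\<lambda>t \<omega>. (u t \<omega>, a t \<omega>, b t \<omega>)) {1..T}"
    and indep_uab: "\<And>t. t \<in> {1..T} \<Longrightarrow>
          \<forall>A \<in> sets (borel :: (real^'n) measure). \<forall>B \<in> sets (borel :: ((real^'n) \<times> real) measure).
            measure M {\<omega> \<in> space M. u t \<omega> \<in> A \<and> (a t \<omega>, b t \<omega>) \<in> B}
              = measure M (u t -` A \<inter> space M) * measure M ((\<lambda>\<omega>. (a t \<omega>, b t \<omega>)) -` B \<inter> space M)"
    and distr_ab: "\<And>t. t \<in> {1..T} \<Longrightarrow> distr M borel (\<lambda>\<omega>. (a t \<omega>, b t \<omega>)) = Pab"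
    and distr_u: "\<And>t A. t \<in> {1..T} \<Longrightarrow> A \<in> sets borel \<Longrightarrow>
          measure M (u t -` A \<inter> space M) = (1 - \<delta>) * indicator A ustar + \<delta> * measure P' A"
    and xopt: "\<And>uv av bv. (\<forall>i. 0 \<le> av $ i) \<Longrightarrow> 0 \<le> bv \<Longrightarrow> lp_optimal uv av bv (xopt uv av bv)"
  shows "\<exists>E \<in> sets M. E \<subseteq>
           {\<omega> \<in> space M.
              (SUP v \<in> sphere 0 1.
                 \<bar>(1 / real T) * (\<Sum>t = 1..T. indicator
                      (opt_dirs (a t \<omega>) (b t \<omega>) (xopt (u t \<omega>) (a t \<omega>) (b t \<omega>))) v)
                  - (1 / real T) * (\<Sum>t = 1..T. indicator
                      (opt_dirs (a t \<omega>) (b t \<omega>) (xopt ustar (a t \<omega>) (b t \<omega>))) v)\<bar>)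
              \<le> \<delta> + ln (real T) / sqrt (real T)}
         \<and> measure M E \<ge> 1 - 1 / real T"
proof -
  interpret prob_space M by (rule M)
  define X where "X = (\<lambda>t \<omega>. indicator (- {ustar}) (u t \<omega>) :: real)"
  define \<mu> where "\<mu> = (\<Sum>t\<in>{1..T}. expectation (X t))"
  define \<epsilon> where "\<epsilon> = real T * (ln (real T) / sqrt (real T))"
  have Tpos: "real T > 0" using T by simp
  have eps0: "\<epsilon> \<ge> 0" unfolding \<epsilon>_def using T by simp
  have measX: "X t \<in> borel_measurable M" if "t \<in> {1..T}" for t
    unfolding X_def using meas_u[OF that] by measurable
  have indX: "indep_vars (\<lambda>_. borel) X {1..T}"
  proof -
    have "indep_vars (\<lambda>_. borel) (\<lambda>t \<omega>. (\<lambda>z. indicator (- {ustar}) (fst z) :: real) ((u t \<omega>, a t \<omega>, b t \<omega>))) {1..T}"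
    proof (rule indep_vars_compose2[OF indep])
      have f: "(fst :: (real^'n) \<times> (real^'n) \<times> real \<Rightarrow> real^'n) \<in> borel_measurable borel"
        by (intro borel_measurable_continuous_onI continuous_intros)
      have "(\<lambda>z. indicator (- {ustar}) z :: real) \<in> borel_measurable borel" by measurable
      from measurable_compose[OF f this]
      show "(\<lambda>z :: (real^'n) \<times> (real^'n) \<times> real. indicator (- {ustar}) (fst z) :: real) \<in> borel_measurable borel" for i
        by (simp add: o_def)
    qed
    then show ?thesis unfolding X_def by simp
  qed
  interpret H: Hoeffding_ineq M "{1..T}" X "\<lambda>_. 0" "\<lambda>_. 1" \<mu>
  proof unfold_locales
    show "finite {1..T}" by simp
    show "indep_vars (\<lambda>_. borel) X {1..T}" by (rule indX)
    show "AE x in M. X i x \<in> {0..1}" if "i \<in> {1..T}" for i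
      by (rule AE_I2) (simp add: X_def indicator_def)
  qed (simp add: \<mu>_def)
  have EX: "expectation (X t) \<le> \<delta>" if t: "t \<in> {1..T}" for t
  proof -
    have "expectation (X t) = expectation (indicator (u t -` (- {ustar}) \<inter> space M) :: 'w \<Rightarrow> real)"
      by (rule Bochner_Integration.integral_cong) (auto simp: X_def indicator_def)
    also have "\<dots> = measure M (u t -` (- {ustar}) \<inter> space M)"
      by (simp add: Int_absorb2)
    also have "\<dots> = \<delta> * measure P' (- {ustar})"
      using distr_u[OF t, of "- {ustar}"] by simp
    also have "\<dots> \<le> \<delta> * 1"
      by (rule mult_left_mono) (use delta prob_space.prob_le_1[OF P'_prob] in auto)
    finally show ?thesis by simp
  qed
  have mu_le: "\<mu> \<le> real T * \<delta>"
  proof -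
    have "\<mu> \<le> (\<Sum>t\<in>{1..T}. \<delta>)" unfolding \<mu>_def by (rule sum_mono) (rule EX)
    then show ?thesis by simp
  qed
  have hoef: "prob {x\<in>space M. (\<Sum>t\<in>{1..T}. X t x) \<ge> \<mu> + \<epsilon>} \<le> exp (-2 * \<epsilon>\<^sup>2 / real T)"
    using H.Hoeffding_ineq_ge[OF eps0] T by simp
  have ex_le: "exp (-2 * \<epsilon>\<^sup>2 / real T) \<le> 1 / real T"
  proof -
    have sq: "sqrt (real T) ^ 2 = real T" using Tpos by simp
    have "-2 * \<epsilon>\<^sup>2 / real T = -2 * (ln (real T))\<^sup>2"
      unfolding \<epsilon>_def using Tpos sq by (simp add: field_simps power2_eq_square)
    moreover have "-2 * (ln (real T))\<^sup>2 \<le> - ln (real T)"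
    proof (cases "T = 1")
      case True then show ?thesis by simp
    next
      case False
      then have "real T \<ge> 2" using T by simp
      then have "ln (real T) \<ge> ln 2" using ln_le_cancel_iff by simp
      moreover have "ln (2::real) \<ge> 1/2"
      proof -
        have "exp (1/2::real) ^ 2 = exp 1" by (simp flip: exp_of_nat_mult)
        also have "\<dots> \<le> 3" by (rule exp_le)
        also have "(3::real) \<le> 2 ^ 2" by simp
        finally have "exp (1/2::real) \<le> 2"
          by (rule power2_le_imp_le) simp
        then show ?thesis by (metis ln_exp ln_le_cancel_iff exp_gt_zero zero_less_numeral)
      qed
      ultimately have "ln (real T) \<ge> 1/2" by simp
      then have "ln (real T) * 1 \<le> ln (real T) * (2 * ln (real T))"
        by (intro mult_left_mono) auto
      then show ?thesis by (simp add: power2_eq_square)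
    qed
    ultimately have "exp (-2 * \<epsilon>\<^sup>2 / real T) \<le> exp (- ln (real T))" by simp
    also have "\<dots> = 1 / real T" using Tpos by (simp add: exp_minus inverse_eq_divide)
    finally show ?thesis .
  qed
  define E where "E = {x\<in>space M. (\<Sum>t\<in>{1..T}. X t x) < \<mu> + \<epsilon>}"
  have Esets: "E \<in> sets M" unfolding E_def using measX by measurable
  have Ecomp: "space M - E = {x\<in>space M. (\<Sum>t\<in>{1..T}. X t x) \<ge> \<mu> + \<epsilon>}"
    unfolding E_def by auto
  have "measure M E = 1 - prob (space M - E)"
    using prob_compl[OF Esets] by simp
  also have "\<dots> \<ge> 1 - 1 / real T" using hoef ex_le Ecomp by simp
  finally have Emeas: "measure M E \<ge> 1 - 1 / real T" .
  show ?thesis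
  proof (intro bexI[OF _ Esets] conjI Emeas subsetI)
    fix \<omega> assume \<omega>: "\<omega> \<in> E"
    then have \<omega>s: "\<omega> \<in> space M" and sumlt: "(\<Sum>t\<in>{1..T}. X t \<omega>) < \<mu> + \<epsilon>" unfolding E_def by auto
    have bnd: "(\<Sum>t\<in>{1..T}. X t \<omega>) / real T \<le> \<delta> + ln (real T) / sqrt (real T)"
    proof -
      have "(\<Sum>t\<in>{1..T}. X t \<omega>) \<le> real T * (\<delta> + ln (real T) / sqrt (real T))"
        using sumlt mu_le unfolding \<epsilon>_def by (simp add: algebra_simps)
      then show ?thesis using Tpos by (simp add: field_simps)
    qed
    have "(SUP v \<in> sphere 0 1.
                 \<bar>(1 / real T) * (\<Sum>t = 1..T. indicator
                      (opt_dirs (a t \<omega>) (b t \<omega>) (xopt (u t \<omega>) (a t \<omega>) (b t \<omega>))) v)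
                  - (1 / real T) * (\<Sum>t = 1..T. indicator
                      (opt_dirs (a t \<omega>) (b t \<omega>) (xopt ustar (a t \<omega>) (b t \<omega>))) v)\<bar>)
              \<le> \<delta> + ln (real T) / sqrt (real T)"
    proof (rule cSUP_least)
      show "sphere (0::real^'n) 1 \<noteq> {}" by simp
    next
      fix v :: "real^'n"
      let ?i1 = "\<lambda>t. indicator (opt_dirs (a t \<omega>) (b t \<omega>) (xopt (u t \<omega>) (a t \<omega>) (b t \<omega>))) v :: real"
      let ?i2 = "\<lambda>t. indicator (opt_dirs (a t \<omega>) (b t \<omega>) (xopt ustar (a t \<omega>) (b t \<omega>))) v :: real"
      have trm: "\<bar>?i1 t - ?i2 t\<bar> \<le> X t \<omega>" for t
        by (cases "u t \<omega> = ustar") (auto simp: X_def indicator_def)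
      have "\<bar>(1 / real T) * (\<Sum>t = 1..T. ?i1 t) - (1 / real T) * (\<Sum>t = 1..T. ?i2 t)\<bar>
            = \<bar>\<Sum>t = 1..T. ?i1 t - ?i2 t\<bar> / real T"
        by (simp add: sum_subtractf abs_divide flip: diff_divide_distrib)
      also have "\<dots> \<le> (\<Sum>t = 1..T. \<bar>?i1 t - ?i2 t\<bar>) / real T"
        using Tpos by (intro divide_right_mono sum_abs) auto
      also have "\<dots> \<le> (\<Sum>t = 1..T. X t \<omega>) / real T"
        using Tpos by (intro divide_right_mono sum_mono trm) auto
      also have "\<dots> \<le> \<delta> + ln (real T) / sqrt (real T)" by (rule bnd)
      finally show "\<bar>(1 / real T) * (\<Sum>t = 1..T. ?i1 t) - (1 / real T) * (\<Sum>t = 1..T. ?i2 t)\<bar>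
            \<le> \<delta> + ln (real T) / sqrt (real T)" .
    qed
    then show "\<omega> \<in> {\<omega> \<in> space M.
              (SUP v \<in> sphere 0 1.
                 \<bar>(1 / real T) * (\<Sum>t = 1..T. indicator
                      (opt_dirs (a t \<omega>) (b t \<omega>) (xopt (u t \<omega>) (a t \<omega>) (b t \<omega>))) v)
                  - (1 / real T) * (\<Sum>t = 1..T. indicator
                      (opt_dirs (a t \<omega>) (b t \<omega>) (xopt ustar (a t \<omega>) (b t \<omega>))) v)\<bar>)
              \<le> \<delta> + ln (real T) / sqrt (real T)}" using \<omega>s by simp
  qed
qed

end
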